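(* In the setting of the context, assume in addition that $\frac1q\|\cdot\|^q$ is $(q,\beta)$-uniformly convex w.r.t. $\|\cdot\|$ for some $\beta>0$. Let $i\ge1$, let $u_i\in\partial f(x_i)$ be the subgradient used in $E_i$, and let $\zeta_i\in\partial\bigl(\frac1q\|\cdot\|^q\bigr)(x_i-\hat x_{i-1})$. Then for any $\gamma_i'\in(0,\gamma]$, $$E_i\le a_i\Bigl\langle u_i+\frac{\gamma_i'A_i^{q-1}}{a_i^q}\zeta_i,\ \hat z_i-z_i\Bigr\rangle-\gamma_i'\Bigl(\frac{A_i^q}{q\,a_i^q}\|x_i-\hat x_{i-1}\|^q+\frac{\beta}{q}\|\hat z_i-z_i\|^q\Bigr).$$
   Context: $\|\cdot\|$ is a norm on $\mathbb{R}^d$. A function $\varphi:\mathbb{R}^d\to\mathbb{R}\cup\{+\infty\}$ is $(s,\sigma)$-uniformly convex w.r.t. $\|\cdot\|$ ($s\ge2$, $\sigma>0$) if $\varphi(y)\ge\varphi(x)+\langle\zeta,y-x\rangle+\frac{\sigma}{s}\|y-x\|^s$ for all $y$, all $x$ with $\partial\varphi(x)\ne\emptyset$ and all $\zeta\in\partial\varphi(x)$. $f=g+l$ with $g:\mathbb{R}^d\to\mathbb{R}$ convex and differentiable and $l:\mathbb{R}^d\to\mathbb{R}\cup\{+\infty\}$ proper, closed, convex. $\hat f(x;y):=g(y)+\langle\nabla g(y),x-y\rangle+l(x)$. Fix $q\ge2$, $\gamma>0$, $x_0\in\mathrm{dom}\,l$, and $h(\cdot;x_0):\mathbb{R}^d\to\mathbb{R}$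 convex with $h(x;x_0)\ge0$, $h(x;x_0)=0$ iff $x=x_0$, $(q,\gamma)$-uniformly convex w.r.t. $\|\cdot\|$. Let $a_1,a_2,\dots>0$, $A_0:=0$, $A_i:=A_{i-1}+a_i$. For points $x_1,x_2,\dots\in\mathrm{dom}\,\partial l$: $\psi_k(x):=\sum_{j=1}^ka_j\hat f(x;x_j)+h(x;x_0)$, $z_0:=x_0$, $z_k:=\operatorname{argmin}\psi_k$ ($k\ge 1$); $\hat x_{i-1}:=\frac{a_i}{A_i}z_{i-1}+\frac{A_{i-1}}{A_i}x_{i-1}$, $\hat z_i:=\frac{A_i}{a_i}x_i-\frac{A_{i-1}}{a_i}x_{i-1}$; for $u_i\in\partial f(x_i)=\nabla g(x_i)+\partial l(x_i)$, $E_i:=A_i\langle u_i,x_i-\frac{a_i}{A_i}z_i-\frac{A_{i-1}}{A_i}x_{i-1}\rangle-\frac{\gamma}{q}\|z_i-z_{i-1}\|^q$. *)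

theory Defs
  imports "HOL-Analysis.Analysis" "HOL-Library.Extended_Real"
begin

text \<open>An (arbitrary) norm on the space, distinct from the Euclidean one.\<close>
definition is_norm :: "('a::real_vector \<Rightarrow> real) \<Rightarrow> bool" where
  "is_norm N \<longleftrightarrow> (\<forall>x. N x = 0 \<longleftrightarrow> x = 0)
     \<and> (\<forall>c x. N (c *\<^sub>R x) = \<bar>c\<bar> * N x)
     \<and> (\<forall>x y. N (x + y) \<le> N x + N y)"

definition edom :: "('a \<Rightarrow> ereal) \<Rightarrow> 'a set" where
  "edom \<phi> = {x. \<phi> x < \<infinity>}"

definition eproper :: "('a \<Rightarrow> ereal) \<Rightarrow> bool" where
  "eproper \<phi> \<longleftrightarrow> (\<forall>x. \<phi> x \<noteq> -\<infinity>) \<and> edom \<phi> \<noteq> {}"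

definition eclosed :: "('a::topological_space \<Rightarrow> ereal) \<Rightarrow> bool" where
  "eclosed \<phi> \<longleftrightarrow> closed {(x, t::real). \<phi> x \<le> ereal t}"

definition econvex :: "('a::real_vector \<Rightarrow> ereal) \<Rightarrow> bool" where
  "econvex \<phi> \<longleftrightarrow> (\<forall>x y t. 0 \<le> t \<and> t \<le> 1 \<longrightarrow>
      \<phi> ((1 - t) *\<^sub>R x + t *\<^sub>R y) \<le> ereal (1 - t) * \<phi> x + ereal t * \<phi> y)"

text \<open>Subdifferential w.r.t. the standard inner product (empty outside the domain).\<close>
definition subdiff :: "('a::real_inner \<Rightarrow> ereal) \<Rightarrow> 'a \<Rightarrow> 'a set" where
  "subdiff \<phi> x = {\<zeta>. \<phi> x < \<infinity> \<and> (\<forall>y. \<phi> x + ereal (\<zeta> \<bullet> (y - x)) \<le> \<phi> y)}"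

text \<open>(s,\<sigma>)-uniform convexity w.r.t. the norm N (the constraints s \<ge> 2, \<sigma> > 0
  are imposed separately as hypotheses).\<close>
definition unif_convex ::
  "('a::real_inner \<Rightarrow> real) \<Rightarrow> real \<Rightarrow> real \<Rightarrow> ('a \<Rightarrow> ereal) \<Rightarrow> bool" where
  "unif_convex N s \<sigma> \<phi> \<longleftrightarrow> (\<forall>x y \<zeta>. \<zeta> \<in> subdiff \<phi> x \<longrightarrow>
      \<phi> x + ereal (\<zeta> \<bullet> (y - x)) + ereal (\<sigma> / s * N (y - x) powr s) \<le> \<phi> y)"

definition Acc :: "(nat \<Rightarrow> real) \<Rightarrow> nat \<Rightarrow> real" where
  "Acc a k = (\<Sum>j=1..k. a j)"

definition fhat :: "('a::real_inner \<Rightarrow> real) \<Rightarrow> ('a \<Rightarrow> 'a) \<Rightarrow> ('a \<Rightarrow> ereal) \<Rightarrow> 'a \<Rightarrow> 'a \<Rightarrow> ereal" where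
  "fhat g Dg l x y = ereal (g y + Dg y \<bullet> (x - y)) + l x"

definition psi :: "('a::real_inner \<Rightarrow> real) \<Rightarrow> ('a \<Rightarrow> 'a) \<Rightarrow> ('a \<Rightarrow> ereal) \<Rightarrow> ('a \<Rightarrow> real)
    \<Rightarrow> (nat \<Rightarrow> real) \<Rightarrow> (nat \<Rightarrow> 'a) \<Rightarrow> nat \<Rightarrow> 'a \<Rightarrow> ereal" where
  "psi g Dg l h a xs k x = (\<Sum>j=1..k. ereal (a j) * fhat g Dg l x (xs j)) + ereal (h x)"

end

theory Submission
  imports Defs
begin

lemma norm_nonneg_N: assumes "is_norm N" shows "N x \<ge> 0"
proof -
  have "N 0 = 0" using assms unfolding is_norm_def by simp
  moreover have "N (x + (-x)) \<le> N x + N (-x)" using assms unfolding is_norm_def by blast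
  moreover have "N (-x) = N x" using assms unfolding is_norm_def
    by (metis abs_minus_cancel abs_one mult_1 scaleR_minus1_left)
  ultimately show ?thesis by simp
qed

lemma N_scale_powr: assumes "is_norm N" "c > 0"
  shows "N (c *\<^sub>R x) powr q = c powr q * N x powr q"
proof -
  have "N (c *\<^sub>R x) = c * N x" using assms unfolding is_norm_def by simp
  thus ?thesis using assms norm_nonneg_N[OF assms(1)] by (simp add: powr_mult)
qed

lemma N_minus: assumes "is_norm N" shows "N (a - b) = N (b - a)"
proof -
  have "N (- (a - b)) = N (a - b)" using assms unfolding is_norm_def
    by (metis abs_minus_cancel abs_one mult_1 scaleR_minus1_left)
  thus ?thesis by simp
qed

lemma vec1: fixes X Z Z' X' :: "'a::real_vector" assumes "a>0" "A>0"
 shows "(X - ((a/A) *\<^sub>R Z' + (A'/A) *\<^sub>R X')) + (1/(A/a)) *\<^sub>R (Z - ((A/a) *\<^sub>R X - (A'/a) *\<^sub>R X')) = (1/(A/a)) *\<^sub>R (Z - Z')"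
proof -
  have c: "1/(A/a) = a/A" "(a/A)*(A/a) = 1" "(a/A)*(A'/a) = A'/A" using assms by auto
  have nz: "a \<noteq> 0" "A \<noteq> 0" using assms by auto
  show ?thesis unfolding c(1) by (simp add: scaleR_diff_right scaleR_scaleR c(2,3) assms nz)
qed
lemma vec2: fixes X Z X' :: "'a::real_vector" assumes "a>0" "A>0"
 shows "X - (a/A) *\<^sub>R Z - (A'/A) *\<^sub>R X' = (a/A) *\<^sub>R (((A/a) *\<^sub>R X - (A'/a) *\<^sub>R X') - Z)"
proof -
  have c: "(a/A)*(A/a) = 1" "(a/A)*(A'/a) = A'/A" using assms by auto
  have nz: "a \<noteq> 0" "A \<noteq> 0" using assms by auto
  show ?thesis by (simp add: scaleR_diff_right scaleR_scaleR c assms nz)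
qed

theorem mainTheorem8:
  fixes N :: "'a::euclidean_space \<Rightarrow> real"
    and g :: "'a \<Rightarrow> real" and Dg :: "'a \<Rightarrow> 'a"
    and l :: "'a \<Rightarrow> ereal"
    and h :: "'a \<Rightarrow> real" and x0 :: 'a
    and q \<gamma> \<beta> :: real
    and a :: "nat \<Rightarrow> real" and x z :: "nat \<Rightarrow> 'a"
    and i :: nat and u \<zeta> :: 'a and \<gamma>' :: real
  assumes N: "is_norm N"
    and g_convex: "convex_on UNIV g"
    and g_grad: "\<And>y. (g has_derivative (\<lambda>v. Dg y \<bullet> v)) (at y)"
    and l_proper: "eproper l" and l_closed: "eclosed l" and l_convex: "econvex l"
    and q: "q \<ge> 2" and \<gamma>: "\<gamma> > 0"
    and x0: "x0 \<in> edom l"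
    and h_convex: "convex_on UNIV h"
    and h_nonneg: "\<And>y. h y \<ge> 0"
    and h_zero: "\<And>y. h y = 0 \<longleftrightarrow> y = x0"
    and h_uc: "unif_convex N q \<gamma> (\<lambda>y. ereal (h y))"
    and a_pos: "\<And>j. j \<ge> 1 \<Longrightarrow> a j > 0"
    and x_0: "x 0 = x0"
    and x_dom: "\<And>j. j \<ge> 1 \<Longrightarrow> subdiff l (x j) \<noteq> {}"
    and z_0: "z 0 = x0"
    and z_min: "\<And>k y. k \<ge> 1 \<Longrightarrow> psi g Dg l h a x k (z k) \<le> psi g Dg l h a x k y"
    and \<beta>: "\<beta> > 0"
    and norm_uc: "unif_convex N q \<beta> (\<lambda>y. ereal (N y powr q / q))"
    and i: "i \<ge> 1"
    and u: "u - Dg (x i) \<in> subdiff l (x i)"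
    and \<zeta>: "\<zeta> \<in> subdiff (\<lambda>y. ereal (N y powr q / q))
               (x i - ((a i / Acc a i) *\<^sub>R z (i - 1) + (Acc a (i - 1) / Acc a i) *\<^sub>R x (i - 1)))"
    and \<gamma>': "0 < \<gamma>'" "\<gamma>' \<le> \<gamma>"
  shows
    "(let A = Acc a i; A' = Acc a (i - 1);
          xh = (a i / A) *\<^sub>R z (i - 1) + (A' / A) *\<^sub>R x (i - 1);
          zh = (A / a i) *\<^sub>R x i - (A' / a i) *\<^sub>R x (i - 1);
          E = A * (u \<bullet> (x i - (a i / A) *\<^sub>R z i - (A' / A) *\<^sub>R x (i - 1)))
              - \<gamma> / q * N (z i - z (i - 1)) powr q
      in E \<le> a i * ((u + (\<gamma>' * A powr (q - 1) / a i powr q) *\<^sub>R \<zeta>) \<bullet> (zh - z i))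
              - \<gamma>' * (A powr q / (q * a i powr q) * N (x i - xh) powr q
                       + \<beta> / q * N (zh - z i) powr q))"
proof -
  define A where "A = Acc a i"
  define A' where "A' = Acc a (i - 1)"
  define xh where "xh = (a i / A) *\<^sub>R z (i - 1) + (A' / A) *\<^sub>R x (i - 1)"
  define zh where "zh = (A / a i) *\<^sub>R x i - (A' / a i) *\<^sub>R x (i - 1)"
  define t where "t = A / a i"
  define p where "p = x i - xh"
  define v where "v = zh - z i"
  define T where "T = t powr q"
  define M where "M = N (z i - z (i - 1)) powr q"
  have ai: "a i > 0" using a_pos i by auto
  have A'nn: "A' \<ge> 0" unfolding A'_def Acc_def using a_pos by (intro sum_nonneg) (metis a_pos atLeastAtMost_iff less_imp_le)
  obtain n where n: "i = Suc n" using i by (cases i) auto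
  have AA: "A = A' + a i" unfolding A_def A'_def Acc_def n by (simp add: sum.cl_ivl_Suc)
  have Apos: "A > 0" using AA A'nn ai by simp
  have tpos: "t > 0" unfolding t_def using Apos ai by simp
  have Tpos: "T > 0" unfolding T_def using tpos by simp
  have y_eq: "p + (1 / t) *\<^sub>R (z i - zh) = (1 / t) *\<^sub>R (z i - z (i - 1))"
    unfolding p_def xh_def zh_def t_def using vec1[OF ai Apos] .
  have e1: "x i - (a i / A) *\<^sub>R z i - (A' / A) *\<^sub>R x (i - 1) = (a i / A) *\<^sub>R v"
    unfolding v_def zh_def using vec2[OF ai Apos] .
  have key0: "N p powr q / q + \<zeta> \<bullet> ((1 / t) *\<^sub>R (z i - zh)) + \<beta> / q * N ((1 / t) *\<^sub>R (z i - zh)) powr q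
      \<le> N ((1 / t) *\<^sub>R (z i - z (i - 1))) powr q / q"
  proof -
    have "\<zeta> \<in> subdiff (\<lambda>y. ereal (N y powr q / q)) p"
      using \<zeta> unfolding p_def xh_def A_def A'_def .
    from norm_uc[unfolded unif_convex_def, rule_format, OF this, of "p + (1 / t) *\<^sub>R (z i - zh)"]
    have H: "ereal (N p powr q / q) + ereal (\<zeta> \<bullet> ((1 / t) *\<^sub>R (z i - zh)))
       + ereal (\<beta> / q * N ((1 / t) *\<^sub>R (z i - zh)) powr q) \<le> ereal (N (p + (1 / t) *\<^sub>R (z i - zh)) powr q / q)"
      by (simp only: add_diff_cancel_left')
    show ?thesis unfolding y_eq[symmetric] using H by (simp only: plus_ereal.simps ereal_less_eq)
  qed
  have Ny: "N ((1 / t) *\<^sub>R (z i - z (i - 1))) powr q = M / T"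
    unfolding M_def T_def using N_scale_powr[OF N, of "1/t"] tpos by (simp add: powr_divide)
  have Nw: "N ((1 / t) *\<^sub>R (z i - zh)) powr q = N v powr q / T"
    unfolding v_def T_def using N_scale_powr[OF N, of "1/t"] tpos N_minus[OF N, of "z i" zh]
    by (simp add: powr_divide)
  have zw: "\<zeta> \<bullet> ((1 / t) *\<^sub>R (z i - zh)) = - (\<zeta> \<bullet> v) / t"
    unfolding v_def by (simp add: inner_diff_right diff_divide_distrib)
  have key: "T * (N p powr q) / q - (T / t) * (\<zeta> \<bullet> v) + \<beta> / q * N v powr q \<le> M / q"
  proof -
    have "N p powr q / q - (\<zeta> \<bullet> v) / t + \<beta> / q * (N v powr q / T) \<le> M / T / q"
      using key0 Ny Nw zw by simp
    then have "T * (N p powr q / q - (\<zeta> \<bullet> v) / t + \<beta> / q * (N v powr q / T)) \<le> T * (M / T / q)"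
      using Tpos by (intro mult_left_mono) auto
    thus ?thesis using Tpos by (simp add: field_simps)
  qed
  have Mnn: "M \<ge> 0" unfolding M_def by simp
  have qpos: "q > 0" using q by simp
  have key2: "\<gamma>' * (T * (N p powr q) / q - (T / t) * (\<zeta> \<bullet> v) + \<beta> / q * N v powr q) \<le> \<gamma> / q * M"
  proof -
    have "\<gamma>' * (T * (N p powr q) / q - (T / t) * (\<zeta> \<bullet> v) + \<beta> / q * N v powr q) \<le> \<gamma>' * (M / q)"
      using key \<gamma>' by (intro mult_left_mono) auto
    also have "\<dots> \<le> \<gamma> * (M / q)" using \<gamma>' Mnn qpos by (intro mult_right_mono) auto
    finally show ?thesis by simp
  qed
  have c1: "a i * (\<gamma>' * A powr (q - 1) / a i powr q) = \<gamma>' * (T / t)"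
    unfolding T_def t_def using ai Apos by (simp add: powr_divide powr_diff field_simps)
  have c2: "A powr q / (q * a i powr q) = T / q"
    unfolding T_def t_def using ai Apos by (simp add: powr_divide field_simps)
  have E: "A * (u \<bullet> (x i - (a i / A) *\<^sub>R z i - (A' / A) *\<^sub>R x (i - 1))) = a i * (u \<bullet> v)"
    unfolding e1 using Apos by simp
  have rhs: "a i * ((u + (\<gamma>' * A powr (q - 1) / a i powr q) *\<^sub>R \<zeta>) \<bullet> v)
     = a i * (u \<bullet> v) + \<gamma>' * (T / t) * (\<zeta> \<bullet> v)"
  proof -
    have "\<And>c. a i * ((u + c *\<^sub>R \<zeta>) \<bullet> v) = a i * (u \<bullet> v) + (a i * c) * (\<zeta> \<bullet> v)"
      by (simp add: inner_add_left distrib_left)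
    from this[of "\<gamma>' * A powr (q - 1) / a i powr q"] show ?thesis unfolding c1 .
  qed
  show ?thesis
    unfolding Let_def A_def[symmetric] A'_def[symmetric] xh_def[symmetric] zh_def[symmetric]
    unfolding p_def[symmetric] v_def[symmetric] M_def[symmetric] E rhs c2
    using key2 by (simp add: algebra_simps)
qed

end
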